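(* Let $\psi(t,b_1,b_3)$ be a function satisfying, for all values of its arguments, (R1) $\psi(qt,b_1,b_3)=b_1\psi(t,b_1,b_3)+(1-b_1)\psi(qt,b_1/q,b_3)$, (R2) $b_3\psi(qt,b_1,b_3)=\psi(t,b_1,b_3)+(b_3-1)\psi(t,b_1,qb_3)$, (R3) $qtb_1b_3\psi(qt,b_1,b_3)=(qtb_1-1)\psi(t,b_1,b_3)+\psi(t,qb_1,b_3)$, (R4) $qt\psi(qt,b_1,b_3)=(qtb_1-1)\psi(t,b_1,b_3)+\psi(qt,b_1,b_3/q)$. Fix $b_1,b_3$ and define $$f(t)=qtb_3(1-b_1)\frac{\psi(qt,b_1/q,qb_3)}{\psi(t,b_1,qb_3)},\qquad g(t)=-\frac{\psi(t,b_1,b_3)}{\psi(t,b_1,qb_3)}.$$ Then $(f,g)$ is a solution of dP$(A_4^{(1)})[b_1,1,b_3]$, i.e. of the system below with $b_2=1$.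
   Context: $q$ is a fixed nonzero complex constant (generic, e.g. not a root of unity); all parameters are generic so that all denominators appearing are nonzero. For parameters $b_1,b_2,b_3$, the equation dP$(A_4^{(1)})[b_1,b_2,b_3]$ is the system for functions $f(t),g(t)$, with $\overline{f}=f(qt)$, $\overline{g}=g(qt)$ and $s=s(t)=\frac{1}{qb_1b_2b_3t}$: $$\overline{g}\,g=\frac{qt}{b_2}\,\frac{(f+b_3)(f+1)}{f+1/s},\qquad \overline{f}\,f=\frac{1}{s}\,\frac{(\overline{g}+1/b_2)(\overline{g}+1/(b_1b_2))}{\overline{g}+qt/b_2},$$ required to hold for all $t$. *)

theory Defs
  imports Complex_Main
begin

definition dPs :: "complex \<Rightarrow> complex \<Rightarrow> complex \<Rightarrow> complex \<Rightarrow> complex \<Rightarrow> complex" where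
  "dPs q b1 b2 b3 t = 1 / (q * b1 * b2 * b3 * t)"

definition dPA4_at :: "complex \<Rightarrow> complex \<Rightarrow> complex \<Rightarrow> complex \<Rightarrow>
    (complex \<Rightarrow> complex) \<Rightarrow> (complex \<Rightarrow> complex) \<Rightarrow> complex \<Rightarrow> bool" where
  "dPA4_at q b1 b2 b3 f g t \<longleftrightarrow>
     (let s = dPs q b1 b2 b3 t in
       g (q * t) * g t = (q * t / b2) * ((f t + b3) * (f t + 1) / (f t + 1 / s)) \<and>
       f (q * t) * f t = (1 / s) * ((g (q * t) + 1 / b2) * (g (q * t) + 1 / (b1 * b2))
                                    / (g (q * t) + q * t / b2)))"

end

theory Submission
  imports Defs
begin

theorem proposition2p1:
  fixes q b1 b3 t :: complex
    and \<psi> :: "complex \<Rightarrow> complex \<Rightarrow> complex \<Rightarrow> complex"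
    and f g :: "complex \<Rightarrow> complex"
  assumes q_nz: "q \<noteq> 0"
    and q_not_root: "\<And>n::nat. n > 0 \<Longrightarrow> q ^ n \<noteq> 1"
    and R1: "\<And>t a1 a3. \<psi> (q*t) a1 a3 = a1 * \<psi> t a1 a3 + (1 - a1) * \<psi> (q*t) (a1/q) a3"
    and R2: "\<And>t a1 a3. a3 * \<psi> (q*t) a1 a3 = \<psi> t a1 a3 + (a3 - 1) * \<psi> t a1 (q*a3)"
    and R3: "\<And>t a1 a3. q*t*a1*a3 * \<psi> (q*t) a1 a3 = (q*t*a1 - 1) * \<psi> t a1 a3 + \<psi> t (q*a1) a3"
    and R4: "\<And>t a1 a3. q*t * \<psi> (q*t) a1 a3 = (q*t*a1 - 1) * \<psi> t a1 a3 + \<psi> (q*t) a1 (a3/q)"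
    and f_def: "\<And>t. f t = q*t*b3*(1 - b1) * (\<psi> (q*t) (b1/q) (q*b3) / \<psi> t b1 (q*b3))"
    and g_def: "\<And>t. g t = - (\<psi> t b1 b3 / \<psi> t b1 (q*b3))"
    and b1_nz: "b1 \<noteq> 0" and b3_nz: "b3 \<noteq> 0" and t_nz: "t \<noteq> 0"
    and den1: "\<psi> t b1 (q*b3) \<noteq> 0"
    and den2: "\<psi> (q*t) b1 (q*b3) \<noteq> 0"
    and den3: "f t + 1 / dPs q b1 1 b3 t \<noteq> 0"
    and den4: "g (q*t) + q*t \<noteq> 0"
  shows "dPA4_at q b1 1 b3 f g t"
proof -
  define A where "A = \<psi> t b1 b3"
  define B where "B = \<psi> t b1 (q*b3)"
  define A1 where "A1 = \<psi> (q*t) b1 b3"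
  define B1 where "B1 = \<psi> (q*t) b1 (q*b3)"
  define C where "C = \<psi> (q*t) (b1/q) (q*b3)"
  define A2 where "A2 = \<psi> (q*(q*t)) b1 b3"
  define B2 where "B2 = \<psi> (q*(q*t)) b1 (q*b3)"
  define C2 where "C2 = \<psi> (q*(q*t)) (b1/q) (q*b3)"
  have BB: "B \<noteq> 0" using den1 B_def by simp
  have BB1: "B1 \<noteq> 0" using den2 B1_def by simp
  have e1: "B1 = b1*B + (1-b1)*C" unfolding B1_def B_def C_def by (rule R1)
  have e2: "B2 = b1*B1 + (1-b1)*C2" unfolding B2_def B1_def C2_def by (rule R1)
  have e3: "b3*A1 = A + (b3-1)*B" unfolding A1_def A_def B_def by (rule R2)
  have e4: "b3*A2 = A1 + (b3-1)*B1" unfolding A2_def A1_def B1_def by (rule R2)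
  have "q*t*B1 = (q*t*b1-1)*B + \<psi> (q*t) b1 (q*b3/q)" unfolding B1_def B_def by (rule R4)
  then have e5: "q*t*B1 = (q*t*b1-1)*B + A1" using q_nz unfolding A1_def by simp
  have "q*(q*t)*B2 = (q*(q*t)*b1-1)*B1 + \<psi> (q*(q*t)) b1 (q*b3/q)" unfolding B2_def B1_def by (rule R4)
  then have e6: "q*(q*t)*B2 = (q*(q*t)*b1-1)*B1 + A2" using q_nz unfolding A2_def by simp
  have ft: "f t = q*t*b3*(1-b1)*C/B" using f_def[of t] unfolding C_def B_def by simp
  have fqt: "f (q*t) = q*(q*t)*b3*(1-b1)*C2/B1" using f_def[of "q*t"] unfolding C2_def B1_def by simp
  have gt: "g t = - A/B" using g_def[of t] unfolding A_def B_def by simp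
  have gqt: "g (q*t) = - A1/B1" using g_def[of "q*t"] unfolding A1_def B1_def by simp
  have s: "1 / dPs q b1 1 b3 t = q*b1*b3*t" unfolding dPs_def by simp
  have ft': "f t = q*t*b3*(B1 - b1*B)/B" using ft e1 by simp
  have fqt': "f (q*t) = q*(q*t)*b3*(B2 - b1*B1)/B1" using fqt e2 by simp
  have k1: "f t + q*b1*b3*t = q*t*b3*B1/B" using ft' BB by (simp add: field_simps)
  have a1: "A1 = q*t*B1 - (q*t*b1-1)*B" using e5 by algebra
  have "f t + b3 = (q*t*b3*(B1-b1*B) + b3*B)/B" using ft' BB by (simp add: field_simps)
  also have "q*t*b3*(B1-b1*B) + b3*B = b3*A1" using a1 by algebra
  finally have k2: "f t + b3 = b3*A1/B" .
  have "f t + 1 = (q*t*b3*(B1-b1*B) + B)/B" using ft' BB by (simp add: field_simps)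
  also have "q*t*b3*(B1-b1*B) + B = A" using a1 e3 by algebra
  finally have k3: "f t + 1 = A/B" .
  have "q*(q*t)*b3*(B2 - b1*B1) = A1 - B1" using e4 e6 by algebra
  then have fqt2: "f (q*t) = (A1 - B1)/B1" using fqt' by simp
  have g1: "g (q*t) + 1 = (B1-A1)/B1" using gqt BB1 by (simp add: field_simps)
  have g2: "g (q*t) + 1/(b1*1) = (B1-b1*A1)/(b1*B1)" unfolding gqt using BB1 b1_nz by (simp add: field_simps)
  have "g (q*t) + q*t/1 = (q*t*B1 - A1)/B1" using gqt BB1 by (simp add: field_simps)
  also have "q*t*B1 - A1 = (q*t*b1-1)*B" using a1 by algebra
  finally have g3: "g (q*t) + q*t/1 = (q*t*b1-1)*B/B1" .
  have g1': "g (q*t) + 1/1 = (B1-A1)/B1" using g1 by simp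
  have m: "q*t*b1-1 \<noteq> 0" using g3 den4 by auto
  have key: "B1-b1*A1 = -(q*t*b1-1)*(B1-b1*B)" using a1 by algebra
  have E1: "g (q*t) * g t = (q*t/1) * ((f t + b3) * (f t + 1) / (f t + 1 / dPs q b1 1 b3 t))"
    unfolding s k1 gqt gt k2 k3 using q_nz t_nz b3_nz BB BB1 by (simp add: field_simps)
  have E2: "f (q*t) * f t = (1 / dPs q b1 1 b3 t) * ((g (q*t) + 1/1) * (g (q*t) + 1/(b1*1)) / (g (q*t) + q*t/1))"
    unfolding s g2 g3 g1' fqt2 ft' key using q_nz t_nz b1_nz b3_nz BB BB1 m by (simp add: field_simps)
  show ?thesis unfolding dPA4_at_def Let_def using E1 E2 by simp
qed

end
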